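(* For an integer $q\geq 2$ and arbitrary positive integers $c$ and $d$, $$P\big(S(c,\underbrace{d,\dots,d}_{q}),\lambda\big)=\mathbf{P}_d^{\,q-1}\left(\mathbf{P}_{c+d+1}-(q-1)\mathbf{P}_c\mathbf{P}_{d-1}\right).$$
   Context: For a graph $G$, $P(G,\lambda)=\det(\lambda I-A(G))$ is the characteristic polynomial of its adjacency matrix $A(G)$. $\mathbf{P}_m$ denotes $P(P_m,\lambda)$, the characteristic polynomial of the path $P_m$ on $m$ vertices, with the convention $\mathbf{P}_0=1$. For positive integers $c_1,\dots,c_m$, the starlike tree $S(c_1,\dots,c_m)$ is obtained from disjoint paths $P_{c_1+1},\dots,P_{c_m+1}$ by identifying one end vertex of each path into a single vertex (the center); the resulting pendant paths are the branches, of lengths $c_1,\dots,c_m$. *)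

theory Defs
  imports "Jordan_Normal_Form.Char_Poly"
begin

text \<open>A (simple) graph on the vertex set {0..<n} is given by a symmetric, irreflexive
  adjacency predicate; its adjacency matrix is the n x n 0/1 integer matrix.\<close>

definition adj_mat :: "nat \<Rightarrow> (nat \<Rightarrow> nat \<Rightarrow> bool) \<Rightarrow> int mat" where
  "adj_mat n E = mat n n (\<lambda>(i, j). if E i j then 1 else 0)"

definition graph_char_poly :: "nat \<Rightarrow> (nat \<Rightarrow> nat \<Rightarrow> bool) \<Rightarrow> int poly" where
  "graph_char_poly n E = char_poly (adj_mat n E)"

definition path_adj :: "nat \<Rightarrow> nat \<Rightarrow> bool" where
  "path_adj i j \<longleftrightarrow> i + 1 = j \<or> j + 1 = i"

definition path_poly :: "nat \<Rightarrow> int poly" where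
  "path_poly m = graph_char_poly m path_adj"

text \<open>Starlike tree S(c_1,...,c_m), given by the list cs = [c_1,...,c_m].
  Vertex 0 is the center; branch k (k < length cs) consists of the vertices
  b_k, b_k + 1, ..., b_k + c_k - 1 where b_k = 1 + c_1 + ... + c_(k-1);
  b_k is adjacent to the center, and consecutive branch vertices are adjacent.\<close>

definition branch_start :: "nat list \<Rightarrow> nat \<Rightarrow> nat" where
  "branch_start cs k = 1 + sum_list (take k cs)"

definition starlike_edge :: "nat list \<Rightarrow> nat \<Rightarrow> nat \<Rightarrow> bool" where
  "starlike_edge cs u v \<longleftrightarrow>
     (\<exists>k < length cs. (1 \<le> cs ! k \<and> u = 0 \<and> v = branch_start cs k) \<or>
        (\<exists>t. t + 1 < cs ! k \<and> u = branch_start cs k + t \<and> v = branch_start cs k + t + 1))"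

definition starlike_adj :: "nat list \<Rightarrow> nat \<Rightarrow> nat \<Rightarrow> bool" where
  "starlike_adj cs u v \<longleftrightarrow> starlike_edge cs u v \<or> starlike_edge cs v u"

definition starlike_poly :: "nat list \<Rightarrow> int poly" where
  "starlike_poly cs = graph_char_poly (1 + sum_list cs) (starlike_adj cs)"

end

theory Submission imports Defs begin

definition cm :: "nat \<Rightarrow> (nat \<Rightarrow> nat \<Rightarrow> bool) \<Rightarrow> int poly mat" where
  "cm n E = char_poly_matrix (adj_mat n E)"

lemma cm_carrier: "cm n E \<in> carrier_mat n n"
  unfolding cm_def Defs.adj_mat_def by (rule char_poly_matrix_closed) auto

lemma cm_entry: "i < n \<Longrightarrow> j < n \<Longrightarrow>
  cm n E $$ (i,j) = (if i = j then [:0,1:] else 0) - (if E i j then 1 else 0)"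
  unfolding cm_def Defs.adj_mat_def char_poly_matrix_def
  by (auto simp: one_pCons)

lemma gcp_cm: "graph_char_poly n E = det (cm n E)"
  unfolding graph_char_poly_def char_poly_def cm_def ..

lemma gcp_cong: "(\<And>i j. i < n \<Longrightarrow> j < n \<Longrightarrow> E i j = E' i j) \<Longrightarrow> graph_char_poly n E = graph_char_poly n E'"
  unfolding graph_char_poly_def Defs.adj_mat_def
  by (rule arg_cong[where f=char_poly], rule eq_matI, auto)

lemma gcp_0: "graph_char_poly 0 E = 1"
  unfolding gcp_cm using cm_carrier by simp

lemma del_last: "mat_delete (cm (Suc m) E) m m = cm m E"
  by (rule eq_matI) (auto simp: mat_delete_def cm_entry cm_carrier[THEN carrier_matD(1)] cm_carrier[THEN carrier_matD(2)])


lemma isolated: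
  assumes "\<And>j. j < m \<Longrightarrow> \<not> E m j" and "\<not> E m m"
  shows "graph_char_poly (Suc m) E = [:0,1:] * graph_char_poly m E"
proof -
  let ?M = "cm (Suc m) E"
  have "det ?M = (\<Sum>j<Suc m. ?M $$ (m,j) * cofactor ?M m j)"
    by (rule laplace_expansion_row[OF cm_carrier]) simp
  also have "\<dots> = (\<Sum>j<Suc m. if j = m then [:0,1:] * det (cm m E) else 0)"
    by (rule sum.cong) (auto simp: cm_entry assms cofactor_def del_last)
  finally show ?thesis by (simp add: gcp_cm)
qed

lemma leaf:
  assumes u: "u < m" and "E m u" and "E u m"
    and r: "\<And>j. j < m \<Longrightarrow> j \<noteq> u \<Longrightarrow> \<not> E m j"
    and c: "\<And>i. i < m \<Longrightarrow> i \<noteq> u \<Longrightarrow> \<not> E i m" and "\<not> E m m"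
  shows "graph_char_poly (Suc m) E = [:0,1:] * graph_char_poly m E
     - graph_char_poly (m - 1) (\<lambda>i j. E (insert_index u i) (insert_index u j))"
proof -
  obtain p where m: "m = Suc p" using u by (cases m) auto
  let ?M = "cm (Suc m) E"
  let ?D = "mat_delete ?M m u"
  let ?E' = "\<lambda>i j. E (insert_index u i) (insert_index u j)"
  have Dc: "?D \<in> carrier_mat m m" using mat_delete_carrier[OF cm_carrier, of "Suc m" E m u] by simp
  have Dent: "?D $$ (i,j) = ?M $$ (i, if j < u then j else Suc j)" if "i < m" "j < m" for i j
    using that cm_carrier[of "Suc m" E] by (auto simp: mat_delete_def)
  have Dcol: "?D $$ (i,p) = (if i = u then -1 else 0)" if "i < m" for i
  proof -
    have "?D $$ (i,p) = ?M $$ (i, m)" using Dent[of i p] that u m by simp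
    also have "\<dots> = (if i = u then -1 else 0)" using that assms by (auto simp: cm_entry)
    finally show ?thesis .
  qed
  have "det ?D = (\<Sum>i<m. ?D $$ (i,p) * cofactor ?D i p)"
    by (rule laplace_expansion_column[OF Dc]) (simp add: m)
  also have "\<dots> = (\<Sum>i<m. if i = u then - cofactor ?D u p else 0)"
    by (rule sum.cong) (auto simp: Dcol)
  also have "\<dots> = - cofactor ?D u p" using u by simp
  finally have dD0: "det ?D = - cofactor ?D u p" .
  have mdD: "mat_delete ?D u p = cm p ?E'"
  proof (rule eq_matI)
    fix i j assume ij: "i < dim_row (cm p ?E')" "j < dim_col (cm p ?E')"
    then have ij': "i < p" "j < p" using cm_carrier[of p ?E'] by auto
    have "mat_delete ?D u p $$ (i,j) = ?D $$ (insert_index u i, j)"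
      using mat_delete_index[of ?D p u p i j, symmetric] ij' Dc m u by simp
    also have "\<dots> = ?M $$ (insert_index u i, insert_index u j)"
      using ij' m by (subst Dent) (auto simp: insert_index_def)
    also have "\<dots> = cm p ?E' $$ (i,j)"
      using ij' m by (auto simp: cm_entry insert_index_def)
    finally show "mat_delete ?D u p $$ (i,j) = cm p ?E' $$ (i,j)" .
  qed (use Dc m cm_carrier[of p ?E'] in auto)
  have dD: "det ?D = - ((-1)^(u+p) * det (cm p ?E'))" using dD0 mdD unfolding cofactor_def by simp
  have "det ?M = (\<Sum>j<Suc m. ?M $$ (m,j) * cofactor ?M m j)"
    by (rule laplace_expansion_row[OF cm_carrier]) simp
  also have "\<dots> = (\<Sum>j<Suc m. (if j = m then [:0,1:] * det (cm m E) else 0)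
     + (if j = u then - ((-1)^(m+u) * det ?D) else 0))"
    apply (rule sum.cong, simp)
    using u assms by (auto simp: cm_entry cofactor_def del_last)
  also have "\<dots> = [:0,1:] * det (cm m E) - ((-1)^(m+u) * det ?D)"
    using u by (simp add: sum.distrib)
  also have "(-1)^(m+u) * det ?D = ((-1)^(Suc p + u) * (-1)^(u+p)) * (- det (cm p ?E'))"
    by (subst dD) (simp add: m)
  also have "(-1::int poly)^(Suc p + u) * (-1)^(u+p) = - 1"
    by (simp add: power_add[symmetric]) (simp add: algebra_simps)
  finally show ?thesis by (simp add: gcp_cm m)
qed


lemma path_poly_0: "path_poly 0 = 1"
  unfolding path_poly_def by (rule gcp_0)

lemma ring_step: fixes x :: "'a::comm_ring_1"
  assumes h1: "a2 = x*a1 - a0" and h2: "q2 = x*q1 - q0"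
  shows "x*(a1*F1 - q1*F0) - (a0*F1 - q0*F0) = a2*F1 - q2*F0"
  unfolding h1 h2 by (simp add: algebra_simps)

lemma path_poly_1: "path_poly (Suc 0) = [:0,1:]"
  unfolding path_poly_def using isolated[of 0 path_adj] by (simp add: path_adj_def gcp_0)

lemma path_poly_SS: "path_poly (Suc (Suc n)) = [:0,1:] * path_poly (Suc n) - path_poly n"
proof -
  have "path_poly (Suc (Suc n)) = [:0,1:] * path_poly (Suc n)
     - graph_char_poly (Suc n - 1) (\<lambda>i j. path_adj (insert_index n i) (insert_index n j))"
    unfolding path_poly_def by (rule leaf) (auto simp: path_adj_def)
  also have "graph_char_poly (Suc n - 1) (\<lambda>i j. path_adj (insert_index n i) (insert_index n j))
      = path_poly n"
    unfolding path_poly_def diff_Suc_1 by (rule gcp_cong) auto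
  finally show ?thesis .
qed

fun Q :: "nat \<Rightarrow> int poly" where
  "Q 0 = 0" | "Q (Suc e) = path_poly e"

lemma path_poly_Suc: "path_poly (Suc e) = [:0,1:] * path_poly e - Q e"
  by (cases e) (auto simp: path_poly_0 path_poly_1 path_poly_SS)

lemma Q_rec: "Q (Suc (Suc e)) = [:0,1:] * Q (Suc e) - Q e"
  using path_poly_Suc[of e] by simp

lemma lin_rec:
  assumes "\<And>e. f (Suc (Suc e)) = [:0,1:] * f (Suc e) - f e"
  shows "f (Suc e) = path_poly e * f 1 - Q e * f 0"
proof (induction e rule: nat_less_induct)
  case (1 e)
  show ?case
  proof (cases e)
    case 0 then show ?thesis by (simp add: path_poly_0)
  next
    case (Suc e1)
    show ?thesis
    proof (cases e1)
      case 0 then show ?thesis using Suc assms[of 0] by (simp add: path_poly_1 path_poly_0)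
    next
      case (Suc e2)
      have "f (Suc e) = [:0,1:] * f (Suc e1) - f e1" using assms \<open>e = Suc e1\<close> by simp
      also have "\<dots> = [:0,1:] * (path_poly e1 * f 1 - Q e1 * f 0) - (path_poly e2 * f 1 - Q e2 * f 0)"
        using "1"[rule_format, of e1] "1"[rule_format, of e2] \<open>e = Suc e1\<close> Suc by simp
      also have "\<dots> = path_poly e * f 1 - Q e * f 0"
        using \<open>e = Suc e1\<close> Suc ring_step[OF path_poly_SS[of e2] Q_rec[of e2]] by simp
      finally show ?thesis .
    qed
  qed
qed

lemma path_add: "d \<ge> 1 \<Longrightarrow> path_poly (c + 1 + d) = path_poly d * path_poly (c+1) - path_poly (d - 1) * path_poly c"
proof -
  assume d: "d \<ge> 1"
  have "path_poly (c + Suc d) = path_poly d * path_poly (c + 1) - Q d * path_poly (c + 0)"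
    using lin_rec[of "\<lambda>e. path_poly (c + e)" d] by (simp add: path_poly_SS)
  then show ?thesis using d by (cases d) auto
qed


lemma bs_snoc: "k \<le> length cs \<Longrightarrow> branch_start (cs @ [e]) k = branch_start cs k"
  unfolding branch_start_def by simp

lemma bs_len: "branch_start cs (length cs) = 1 + sum_list cs"
  unfolding branch_start_def by simp

lemma ex_less_Suc: "(\<exists>k<Suc n. P k) = ((\<exists>k<n. P k) \<or> P n)"
  by (auto simp: less_Suc_eq)

lemma edge_snoc: "starlike_edge (cs @ [e]) u v \<longleftrightarrow> starlike_edge cs u v \<or>
   (1 \<le> e \<and> u = 0 \<and> v = 1 + sum_list cs) \<or>
   (\<exists>t. t + 1 < e \<and> u = 1 + sum_list cs + t \<and> v = 1 + sum_list cs + t + 1)"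
proof -
  have bs: "branch_start (cs@[e]) (length cs) = 1 + sum_list cs" by (simp add: branch_start_def)
  have "starlike_edge (cs @ [e]) u v \<longleftrightarrow>
     (\<exists>k < length cs. (1 \<le> (cs@[e]) ! k \<and> u = 0 \<and> v = branch_start (cs@[e]) k) \<or>
        (\<exists>t. t + 1 < (cs@[e]) ! k \<and> u = branch_start (cs@[e]) k + t \<and> v = branch_start (cs@[e]) k + t + 1))
     \<or> ((1 \<le> (cs@[e]) ! length cs \<and> u = 0 \<and> v = branch_start (cs@[e]) (length cs)) \<or>
        (\<exists>t. t + 1 < (cs@[e]) ! length cs \<and> u = branch_start (cs@[e]) (length cs) + t
           \<and> v = branch_start (cs@[e]) (length cs) + t + 1))"
    unfolding starlike_edge_def length_append_singleton ex_less_Suc ..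
  also have "\<dots> \<longleftrightarrow> starlike_edge cs u v \<or>
   (1 \<le> e \<and> u = 0 \<and> v = 1 + sum_list cs) \<or>
   (\<exists>t. t + 1 < e \<and> u = 1 + sum_list cs + t \<and> v = 1 + sum_list cs + t + 1)"
    unfolding starlike_edge_def bs nth_append_length
    by (intro disj_cong refl) (auto simp: nth_append bs_snoc)
  finally show ?thesis .
qed

lemma edge_nil: "\<not> starlike_edge [] u v"
  unfolding starlike_edge_def by simp

lemma edge_bound: "starlike_edge cs u v \<Longrightarrow> u < v \<and> v < 1 + sum_list cs"
proof (induction cs arbitrary: u v rule: rev_induct)
  case Nil then show ?case by (simp add: edge_nil)
next
  case (snoc e cs)
  from snoc.prems show ?case unfolding edge_snoc using snoc.IH[of u v] by auto
qed

definition Hp :: "nat list \<Rightarrow> int poly" where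
  "Hp cs = graph_char_poly (sum_list cs) (\<lambda>i j. starlike_adj cs (Suc i) (Suc j))"

lemma adj_snoc: "starlike_adj (cs @ [e]) u v \<longleftrightarrow> starlike_adj cs u v \<or>
   (1 \<le> e \<and> (u = 0 \<and> v = 1 + sum_list cs \<or> v = 0 \<and> u = 1 + sum_list cs)) \<or>
   (\<exists>t. t + 1 < e \<and> (u = 1 + sum_list cs + t \<and> v = 1 + sum_list cs + t + 1 \<or>
        v = 1 + sum_list cs + t \<and> u = 1 + sum_list cs + t + 1))"
  unfolding starlike_adj_def edge_snoc by blast

lemma adj_bound: "starlike_adj cs u v \<Longrightarrow> u \<noteq> v \<and> u < 1 + sum_list cs \<and> v < 1 + sum_list cs"
  unfolding starlike_adj_def using edge_bound by fastforce


lemma restr: "i < 1 + sum_list cs + e \<Longrightarrow> j < 1 + sum_list cs + e \<Longrightarrow>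
  starlike_adj (cs @ [Suc e]) i j \<longleftrightarrow> starlike_adj (cs @ [e]) i j"
  unfolding adj_snoc
  apply (intro disj_cong refl)
   apply force
  apply (rule iffI)
  subgoal by (elim exE, rename_tac t, case_tac "t + 1 < e") auto
  by (erule exE, rename_tac t, rule_tac x=t in exI) auto

lemma last_nbr: "starlike_adj (cs @ [Suc (Suc e)]) (1 + sum_list cs + Suc e) j \<longleftrightarrow> j = 1 + sum_list cs + e"
  unfolding adj_snoc using adj_bound[of cs "1 + sum_list cs + Suc e" j] by auto

lemma last_nbr': "starlike_adj (cs @ [Suc (Suc e)]) j (1 + sum_list cs + Suc e) \<longleftrightarrow> j = 1 + sum_list cs + e"
  unfolding adj_snoc using adj_bound[of cs j "1 + sum_list cs + Suc e"] by auto

lemma first_nbr: "starlike_adj (cs @ [Suc 0]) (1 + sum_list cs) j \<longleftrightarrow> j = 0"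
  unfolding adj_snoc using adj_bound[of cs "1 + sum_list cs" j] by auto

lemma first_nbr': "starlike_adj (cs @ [Suc 0]) j (1 + sum_list cs) \<longleftrightarrow> j = 0"
  unfolding adj_snoc using adj_bound[of cs j "1 + sum_list cs"] by auto

lemma adj0: "starlike_adj (cs @ [0]) i j \<longleftrightarrow> starlike_adj cs i j"
  by (simp add: adj_snoc)

lemma adj0': "starlike_adj (cs @ [0]) = starlike_adj cs"
  by (intro ext) (simp add: adj0)

lemmas nbrs = last_nbr[simplified] last_nbr'[simplified] first_nbr[simplified] first_nbr'[simplified]

lemma sp_0: "starlike_poly (cs @ [0]) = starlike_poly cs"
  unfolding starlike_poly_def by (simp add: adj0')

lemma Hp_0: "Hp (cs @ [0]) = Hp cs"
  unfolding Hp_def by (simp add: adj0)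

lemma sp_1: "starlike_poly (cs @ [1]) = [:0,1:] * starlike_poly cs - Hp cs"
proof -
  let ?N = "sum_list cs"
  let ?E = "starlike_adj (cs @ [Suc 0])"
  have "starlike_poly (cs @ [1]) = graph_char_poly (Suc (Suc ?N)) ?E"
    unfolding starlike_poly_def by simp
  also have "\<dots> = [:0,1:] * graph_char_poly (Suc ?N) ?E
     - graph_char_poly (Suc ?N - 1) (\<lambda>i j. ?E (insert_index 0 i) (insert_index 0 j))"
    by (rule leaf) (simp_all add: nbrs)
  also have "graph_char_poly (Suc ?N) ?E = starlike_poly cs"
    unfolding starlike_poly_def
    by (simp, rule gcp_cong) (subst restr[of _ cs 0, simplified], simp_all add: adj0)
  also have "graph_char_poly (Suc ?N - 1) (\<lambda>i j. ?E (insert_index 0 i) (insert_index 0 j)) = Hp cs"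
    unfolding Hp_def diff_Suc_1
    by (rule gcp_cong) (subst restr[of _ cs 0, simplified], simp_all add: adj0 insert_index_def)
  finally show ?thesis .
qed

lemma sp_SS: "starlike_poly (cs @ [Suc (Suc e)]) = [:0,1:] * starlike_poly (cs @ [Suc e]) - starlike_poly (cs @ [e])"
proof -
  let ?N = "sum_list cs"
  let ?E = "starlike_adj (cs @ [Suc (Suc e)])"
  have "starlike_poly (cs @ [Suc (Suc e)]) = graph_char_poly (Suc (1 + ?N + Suc e)) ?E"
    unfolding starlike_poly_def by simp
  also have "\<dots> = [:0,1:] * graph_char_poly (1 + ?N + Suc e) ?E
     - graph_char_poly (1 + ?N + Suc e - 1) (\<lambda>i j. ?E (insert_index (1 + ?N + e) i) (insert_index (1 + ?N + e) j))"
    by (rule leaf) (simp_all add: nbrs)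
  also have "graph_char_poly (1 + ?N + Suc e) ?E = starlike_poly (cs @ [Suc e])"
    unfolding starlike_poly_def
    by (simp, rule gcp_cong) (subst restr[of _ cs "Suc e", simplified], simp_all)
  also have "graph_char_poly (1 + ?N + Suc e - 1) (\<lambda>i j. ?E (insert_index (1 + ?N + e) i) (insert_index (1 + ?N + e) j))
     = starlike_poly (cs @ [e])"
    unfolding starlike_poly_def
    by (simp, rule gcp_cong) (subst restr[of _ cs "Suc e", simplified], simp_all add: insert_index_def restr[simplified])
  finally show ?thesis .
qed

lemma Hp_1: "Hp (cs @ [1]) = [:0,1:] * Hp cs"
proof -
  have "Hp (cs @ [1]) = graph_char_poly (Suc (sum_list cs)) (\<lambda>i j. starlike_adj (cs @ [Suc 0]) (Suc i) (Suc j))"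
    unfolding Hp_def by simp
  also have "\<dots> = [:0,1:] * graph_char_poly (sum_list cs) (\<lambda>i j. starlike_adj (cs @ [Suc 0]) (Suc i) (Suc j))"
    by (rule isolated) (simp_all add: nbrs)
  also have "graph_char_poly (sum_list cs) (\<lambda>i j. starlike_adj (cs @ [Suc 0]) (Suc i) (Suc j)) = Hp cs"
    unfolding Hp_def
    by (rule gcp_cong) (subst restr[of _ cs 0, simplified], simp_all add: adj0)
  finally show ?thesis .
qed

lemma Hp_SS: "Hp (cs @ [Suc (Suc e)]) = [:0,1:] * Hp (cs @ [Suc e]) - Hp (cs @ [e])"
proof -
  let ?N = "sum_list cs"
  let ?E = "\<lambda>i j. starlike_adj (cs @ [Suc (Suc e)]) (Suc i) (Suc j)"
  have "Hp (cs @ [Suc (Suc e)]) = graph_char_poly (Suc (?N + Suc e)) ?E"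
    unfolding Hp_def by simp
  also have "\<dots> = [:0,1:] * graph_char_poly (?N + Suc e) ?E
     - graph_char_poly (?N + Suc e - 1) (\<lambda>i j. ?E (insert_index (?N + e) i) (insert_index (?N + e) j))"
    by (rule leaf) (simp_all add: nbrs)
  also have "graph_char_poly (?N + Suc e) ?E = Hp (cs @ [Suc e])"
    unfolding Hp_def
    by (simp, rule gcp_cong) (subst restr[of _ cs "Suc e", simplified], simp_all)
  also have "graph_char_poly (?N + Suc e - 1) (\<lambda>i j. ?E (insert_index (?N + e) i) (insert_index (?N + e) j))
     = Hp (cs @ [e])"
    unfolding Hp_def
    by (simp, rule gcp_cong) (subst restr[of _ cs "Suc e", simplified], simp_all add: insert_index_def restr[simplified])
  finally show ?thesis .
qed

lemma Hp_snoc: "Hp (cs @ [e]) = path_poly e * Hp cs"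
proof (cases e)
  case 0 then show ?thesis by (simp add: Hp_0 path_poly_0)
next
  case (Suc e1)
  have "Hp (cs @ [Suc e1]) = path_poly e1 * Hp (cs @ [1]) - Q e1 * Hp (cs @ [0])"
    using lin_rec[of "\<lambda>e. Hp (cs @ [e])" e1] Hp_SS by simp
  also have "\<dots> = ([:0,1:] * path_poly e1 - Q e1) * Hp cs"
    unfolding Hp_1 Hp_0 by (simp add: algebra_simps)
  also have "\<dots> = path_poly (Suc e1) * Hp cs" by (simp add: path_poly_Suc)
  finally show ?thesis using Suc by simp
qed

lemma sp_snoc: assumes "e \<ge> 1"
  shows "starlike_poly (cs @ [e]) = path_poly e * starlike_poly cs - path_poly (e - 1) * Hp cs"
proof -
  obtain e1 where e: "e = Suc e1" using assms by (cases e) auto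
  have "starlike_poly (cs @ [Suc e1]) = path_poly e1 * starlike_poly (cs @ [1]) - Q e1 * starlike_poly (cs @ [0])"
    using lin_rec[of "\<lambda>e. starlike_poly (cs @ [e])" e1] sp_SS by simp
  also have "\<dots> = ([:0,1:] * path_poly e1 - Q e1) * starlike_poly cs - path_poly e1 * Hp cs"
    unfolding sp_1 sp_0 by (simp add: algebra_simps)
  also have "\<dots> = path_poly (Suc e1) * starlike_poly cs - path_poly e1 * Hp cs" by (simp add: path_poly_Suc)
  finally show ?thesis using e by simp
qed

lemma Hp_nil: "Hp [] = 1"
  unfolding Hp_def by (simp add: gcp_0)

lemma sp_nil: "starlike_poly [] = [:0,1:]"
proof -
  have "starlike_poly [] = graph_char_poly (Suc 0) (starlike_adj [])"
    unfolding starlike_poly_def by simp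
  also have "\<dots> = [:0,1:] * graph_char_poly 0 (starlike_adj [])"
    by (rule isolated) (auto simp: starlike_adj_def edge_nil)
  finally show ?thesis by (simp add: gcp_0)
qed

lemma rep_snoc: "c # replicate (Suc k) d = (c # replicate k d) @ [d]"
  by (simp add: replicate_append_same)

lemma Hp_rep: "Hp (c # replicate k d) = path_poly c * path_poly d ^ k"
proof (induction k)
  case 0
  have "Hp [c] = path_poly c" using Hp_snoc[of "[]" c] by (simp add: Hp_nil)
  then show ?case by simp
next
  case (Suc k) then show ?case by (simp only: rep_snoc Hp_snoc) (simp add: algebra_simps)
qed

lemma sp_single: "c \<ge> 1 \<Longrightarrow> starlike_poly [c] = path_poly (c + 1)"
proof -
  assume c: "c \<ge> 1"
  have "starlike_poly [c] = path_poly c * [:0,1:] - path_poly (c - 1)"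
    using sp_snoc[of c "[]"] c by (simp add: sp_nil Hp_nil)
  also have "\<dots> = path_poly (c + 1)" using c path_poly_Suc[of c] by (cases c) (auto simp: algebra_simps)
  finally show ?thesis .
qed

lemma sp_rep: assumes "c \<ge> 1" "d \<ge> 1"
  shows "starlike_poly (c # replicate (Suc k) d) = path_poly d ^ k *
    (path_poly d * path_poly (c + 1) - of_nat (Suc k) * path_poly c * path_poly (d - 1))"
proof (induction k)
  case 0
  show ?case using sp_snoc[of d "[c]"] assms using Hp_rep[of c 0 d] by (simp add: sp_single algebra_simps)
next
  case (Suc k)
  have "starlike_poly (c # replicate (Suc (Suc k)) d) = path_poly d * starlike_poly (c # replicate (Suc k) d)
      - path_poly (d - 1) * Hp (c # replicate (Suc k) d)"
    by (simp only: rep_snoc[of c "Suc k"] sp_snoc[OF assms(2)])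
  also have "\<dots> = path_poly d ^ Suc k *
    (path_poly d * path_poly (c + 1) - of_nat (Suc (Suc k)) * path_poly c * path_poly (d - 1))"
    unfolding Suc Hp_rep by (simp add: algebra_simps)
  finally show ?case .
qed

theorem lemma3:
  fixes q c d :: nat
  assumes "q \<ge> 2" and "c > 0" and "d > 0"
  shows "starlike_poly (c # replicate q d) =
    path_poly d ^ (q - 1) *
      (path_poly (c + d + 1) - of_nat (q - 1) * path_poly c * path_poly (d - 1))"
proof -
  obtain k where q: "q = Suc k" using assms by (cases q) auto
  have "starlike_poly (c # replicate q d) = path_poly d ^ k *
    (path_poly d * path_poly (c + 1) - of_nat (Suc k) * path_poly c * path_poly (d - 1))"
    unfolding q by (rule sp_rep) (use assms in auto)
  also have "path_poly d * path_poly (c + 1) = path_poly (c + d + 1) + path_poly (d - 1) * path_poly c"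
    using path_add[of d c] assms by (simp add: algebra_simps)
  finally show ?thesis unfolding q by (simp add: algebra_simps)
qed

end
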